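(* Let $k$ be a positive integer, $a=3k+1$, $S=\{a,2a-3,2a-2\}$ and $H_{6,k}=\langle S\rangle$. Then $H_{6,k}$ is a $3$-permutation numerical semigroup.
   Context: $\mathbb{N}=\{0,1,2,\dots\}$. A numerical semigroup is a submonoid $G$ of $(\mathbb{N},+,0)$ with $\mathbb{N}\setminus G$ finite; $\langle S\rangle$ is the submonoid generated by $S$. Writing the elements of a numerical semigroup as $0=g_0<g_1<g_2<\cdots$, it is an $n$-permutation numerical semigroup if it is generated by $\{g_1,\dots,g_n\}$ and for every $k\in\mathbb{N}$ the tuple $(g_{kn+1}\bmod n,\dots,g_{kn+n}\bmod n)$ contains exactly one representative of each residue class mod $n$. *)

theory Defs
  imports Main "HOL-Library.Infinite_Set"
begin

inductive_set submonoid_gen :: "nat set \<Rightarrow> nat set" for S :: "nat set" where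
  zero: "0 \<in> submonoid_gen S"
| gen_add: "s \<in> S \<Longrightarrow> x \<in> submonoid_gen S \<Longrightarrow> s + x \<in> submonoid_gen S"

definition numerical_semigroup :: "nat set \<Rightarrow> bool" where
  "numerical_semigroup G \<longleftrightarrow>
     0 \<in> G \<and> (\<forall>x\<in>G. \<forall>y\<in>G. x + y \<in> G) \<and> finite (UNIV - G)"

text \<open>The i-th element g_i of G in increasing order (g_0 = 0 for a numerical semigroup).\<close>
definition sg_elem :: "nat set \<Rightarrow> nat \<Rightarrow> nat" where
  "sg_elem G i = enumerate G i"

definition perm_numerical_semigroup :: "nat \<Rightarrow> nat set \<Rightarrow> bool" where
  "perm_numerical_semigroup n G \<longleftrightarrow>
     numerical_semigroup G \<and>
     G = submonoid_gen {sg_elem G i | i. 1 \<le> i \<and> i \<le> n} \<and>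
     (\<forall>k::nat. bij_betw (\<lambda>i. sg_elem G (k * n + i) mod n) {1..n} {0..<n})"

end

theory Submission imports Defs begin

definition DD :: "nat \<Rightarrow> nat \<Rightarrow> nat set" where
  "DD a b = {n. \<exists>m t j. j \<le> t \<and> t \<le> m \<and> n = m*a + t*b + j}"
definition yy :: "nat \<Rightarrow> nat \<Rightarrow> nat" where
  "yy a u = (u+1)*a - 3*((u+1) div 2)"
definition BE :: "nat \<Rightarrow> nat \<Rightarrow> nat set" where
  "BE k a = {0} \<union> {x. \<exists>u i. 1 \<le> u \<and> u < 2*k \<and> x = yy a u + 1 + 3*i \<and> x + 2 \<le> (u+1)*a}
     \<union> {x. \<exists>i. x = 2*k*a + 2 + 3*i}"

definition NX :: "nat set \<Rightarrow> nat \<Rightarrow> nat \<Rightarrow> bool" where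
  "NX D x y \<longleftrightarrow> x < y \<and> y \<in> D \<and> (\<forall>z. x < z \<and> z < y \<longrightarrow> z \<notin> D)"

lemma enum_next:
  fixes S :: "nat set"
  assumes "infinite S" "enumerate S n = x" "NX S x y"
  shows "enumerate S (Suc n) = y"
  unfolding enumerate_Suc''[OF assms(1)] assms(2)
  using assms(3) unfolding NX_def
  by (intro Least_equality) (auto simp: not_less[symmetric])

lemma presb: fixes Yv P x i Q :: nat shows "Yv + 3*Q = P \<Longrightarrow> x = Yv+1+3*i \<Longrightarrow> x+2 \<le> P \<Longrightarrow> \<not> x+5 \<le> P \<Longrightarrow> x+2 = P"
  by presburger

context
  fixes k a b :: nat
  assumes k1: "k \<ge> 1" and aa: "a = 3*k+1" and bb: "b = 3*k - 2"
begin

lemma ab: "a = b + 3" using k1 aa bb by simp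
lemma a4: "a \<ge> 4" using k1 aa by simp

lemma level:
  assumes "n \<in> DD a b"
  shows "\<exists>s. n \<le> s*a \<and> s*a \<le> n + 3*(s div 2) \<and> n + 1 \<noteq> s*a"
proof -
  obtain m t j where h: "j \<le> t" "t \<le> m" "n = m*a + t*b + j" using assms unfolding DD_def by blast
  have e: "(m+t)*a + j = n + 3*t" using h ab by (simp add: algebra_simps)
  have td: "t \<le> (m+t) div 2" using h by linarith
  have g: "\<And>S q. S + j = n + 3*t \<Longrightarrow> t \<le> q \<Longrightarrow> n \<le> S \<and> S \<le> n + 3*q \<and> n + 1 \<noteq> S"
  proof (intro conjI)
    fix S q assume "S + j = n + 3*t" "t \<le> q"
    then show "n \<le> S" "S \<le> n + 3*q" "n + 1 \<noteq> S" using h(1) by (linarith, linarith, presburger)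
  qed
  show ?thesis using g[OF e td] by blast
qed

lemma mono_f:
  assumes "s \<le> s'"
  shows "s*a + 3*(s' div 2) \<le> s'*a + 3*(s div 2)"
proof -
  obtain d where d: "s' = s + d" using assms le_Suc_ex by blast
  have 1: "s'*a = s*a + d*a" using d by (simp add: algebra_simps)
  have 2: "d*a \<ge> 4*d" using a4 by simp
  have 3: "s' div 2 \<le> s div 2 + (d+1) div 2" using d by linarith
  have 4: "3*((d+1) div 2) \<le> 4*d \<or> d = 0" by linarith
  show ?thesis using 1 2 3 4 d by (cases "d = 0") (simp, linarith)
qed

lemma gap:
  assumes "u*a < g" "g + 3*((u+1) div 2) < (u+1)*a"
  shows "g \<notin> DD a b"
proof
  assume "g \<in> DD a b"
  then obtain s where s: "g \<le> s*a" "s*a \<le> g + 3*(s div 2)" using level by blast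
  show False
  proof (cases "s \<le> u")
    case True
    then have "s*a \<le> u*a" by simp
    then show False using s assms by linarith
  next
    case False
    then have "(u+1)*a + 3*(s div 2) \<le> s*a + 3*((u+1) div 2)" using mono_f[of "u+1" s] by simp
    then show False using s assms by linarith
  qed
qed

lemma gap2:
  assumes "g + 1 = u*a" "u \<le> 2*k"
  shows "g \<notin> DD a b"
proof
  assume "g \<in> DD a b"
  then obtain s where s: "g \<le> s*a" "s*a \<le> g + 3*(s div 2)" "g + 1 \<noteq> s*a" using level by blast
  have q: "(u+1) div 2 \<le> k" using assms(2) by linarith
  consider "s < u" | "s = u" | "s > u" by linarith
  then show False
  proof cases
    case 1
    then have "(s+1)*a \<le> u*a" by (metis Suc_eq_plus1 Suc_leI mult_le_mono1)
    then show False using s assms a4 by (simp add: algebra_simps)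
  next
    case 2 then show False using s assms by simp
  next
    case 3
    then have "(u+1)*a + 3*(s div 2) \<le> s*a + 3*((u+1) div 2)" using mono_f[of "u+1" s] by simp
    then show False using s assms q aa by (simp add: algebra_simps)
  qed
qed

lemma mem1: "s*a \<in> DD a b"
  unfolding DD_def by (rule CollectI, rule exI[of _ s], rule exI[of _ 0], rule exI[of _ 0]) simp

lemma mem2:
  assumes "2 \<le> d" "d \<le> 3*(s div 2)" "n + d = s*a"
  shows "n \<in> DD a b"
proof -
  define t where "t = (d+2) div 3"
  define j where "j = 3*t - d"
  have tj: "j \<le> t" "t \<le> s div 2" "j + d = 3*t" using assms unfolding t_def j_def by linarith+
  obtain m where m: "s = m + t" using tj(2) by (metis add.commute div_le_dividend le_Suc_ex order_trans)
  have mt: "t \<le> m" using m tj by linarith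
  have "s*a = m*a + t*b + 3*t" using m ab by (simp add: algebra_simps)
  then have "n = m*a + t*b + j" using assms(3) tj(3) by linarith
  then show ?thesis unfolding DD_def using tj mt by blast
qed

lemma mem3:
  assumes "n \<ge> 2*k*a"
  shows "n \<in> DD a b"
proof -
  define q where "q = n div a"
  define r where "r = n mod a"
  have n: "n = q*a + r" unfolding q_def r_def by simp
  have ra: "r < a" unfolding r_def using a4 by simp
  have "2*k*a \<le> q*a + r" using assms n by simp
  then have q2: "q \<ge> 2*k"
  proof -
    have "2*k*a < (q+1)*a" using \<open>2*k*a \<le> q*a + r\<close> ra by (simp add: algebra_simps)
    then have "2*k < q+1" by (metis mult_less_cancel2)
    then show ?thesis by simp
  qed
  consider "r = 0" | "r = a - 1" | "1 \<le> r \<and> r \<le> a - 2" using ra by linarith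
  then show ?thesis
  proof cases
    case 1 then show ?thesis using n mem1 by simp
  next
    case 2
    have "n + (a+1) = (q+2)*a" using n 2 a4 by (simp add: algebra_simps)
    moreover have "a + 1 \<le> 3*((q+2) div 2)" using q2 aa by linarith
    ultimately show ?thesis using mem2[of "a+1" "q+2" n] a4 by simp
  next
    case 3
    have "r + (a - r) = a" using 3 a4 by linarith
    then have "n + (a - r) = (q+1)*a" using n by (simp add: algebra_simps)
    moreover have "a - r \<le> 3*((q+1) div 2)" using q2 aa 3 by linarith
    moreover have "2 \<le> a - r" using 3 by linarith
    ultimately show ?thesis using mem2[of "a-r" "q+1" n] by blast
  qed
qed

lemma inf_D: "infinite (DD a b)"
proof -
  have "{2*k*a..} \<subseteq> DD a b" using mem3 by auto
  then show ?thesis using infinite_Ici finite_subset by blast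
qed

lemma yyeq: "yy a u + 3*((u+1) div 2) = (u+1)*a"
proof -
  have "3*((u+1) div 2) \<le> a*(u+1)" by (rule mult_le_mono) (use a4 in auto)
  then have "3*((u+1) div 2) \<le> (u+1)*a" by (simp add: mult.commute)
  then show ?thesis unfolding yy_def by (rule le_add_diff_inverse2)
qed

lemma amod: "(w*a) mod 3 = w mod 3"
proof -
  have "w*a = 3*(k*w) + w" using aa by (simp add: algebra_simps)
  then show ?thesis by presburger
qed

lemma seg:
  assumes "1 \<le> w" "w \<le> 2*k"
  shows "NX (DD a b) (w*a) (yy a w) \<and> NX (DD a b) (yy a w) (yy a w + 1) \<and>
    (w*a) mod 3 \<noteq> yy a w mod 3 \<and> (w*a) mod 3 \<noteq> (yy a w + 1) mod 3 \<and>
    yy a w mod 3 \<noteq> (yy a w+1) mod 3 \<and> yy a w + 1 \<in> BE k a"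
proof -
  define Q where "Q = (w+1) div 2"
  have Y: "yy a w + 3*Q = (w+1)*a" unfolding Q_def by (rule yyeq)
  have Q1: "1 \<le> Q" "Q \<le> k" using assms unfolding Q_def by linarith+
  have wa: "(w+1)*a = w*a + a" by simp
  have lt: "w*a < yy a w" using Y Q1 aa wa by linarith
  have m2: "yy a w \<in> DD a b" by (rule mem2[of "3*Q" "w+1"]) (use Y Q1 in \<open>auto simp: Q_def\<close>)
  have m3: "yy a w + 1 \<in> DD a b" by (rule mem2[of "3*Q - 1" "w+1"]) (use Y Q1 in \<open>auto simp: Q_def\<close>)
  have N1: "NX (DD a b) (w*a) (yy a w)"
    unfolding NX_def
  proof (intro conjI allI impI lt m2)
    fix z assume z: "w*a < z \<and> z < yy a w"
    show "z \<notin> DD a b" by (rule gap[of w]) (use z Y in \<open>auto simp: Q_def\<close>)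
  qed
  have N2: "NX (DD a b) (yy a w) (yy a w + 1)" unfolding NX_def using m3 by auto
  have r1: "(w*a) mod 3 = w mod 3" by (rule amod)
  have r2: "((w+1)*a) mod 3 = (w+1) mod 3" by (rule amod)
  have R: "\<And>Y P1 P2. Y + 3*Q = P2 \<Longrightarrow> P1 mod 3 = w mod 3 \<Longrightarrow> P2 mod 3 = (w+1) mod 3 \<Longrightarrow>
      P1 mod 3 \<noteq> Y mod 3 \<and> P1 mod 3 \<noteq> (Y+1) mod 3 \<and> Y mod 3 \<noteq> (Y+1) mod 3"
  proof -
    fix Y P1 P2 :: nat assume h: "Y + 3*Q = P2" "P1 mod 3 = w mod 3" "P2 mod 3 = (w+1) mod 3"
    have "Y mod 3 = (w+1) mod 3" using h(1,3) by (metis mod_mult_self2)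
    then show "P1 mod 3 \<noteq> Y mod 3 \<and> P1 mod 3 \<noteq> (Y+1) mod 3 \<and> Y mod 3 \<noteq> (Y+1) mod 3"
    proof -
      have r: "w mod 3 < 3" by simp
      have e1: "(w+1) mod 3 = (w mod 3 + 1) mod 3" by (rule mod_add_left_eq[symmetric])
      have e2: "(Y+1) mod 3 = (Y mod 3 + 1) mod 3" by (rule mod_add_left_eq[symmetric])
      have "w mod 3 = 0 \<or> w mod 3 = 1 \<or> w mod 3 = 2" using r by linarith
      then show ?thesis using e1 e2 h(2) \<open>Y mod 3 = (w+1) mod 3\<close> by auto
    qed
  qed
  have RR: "(w*a) mod 3 \<noteq> yy a w mod 3 \<and> (w*a) mod 3 \<noteq> (yy a w + 1) mod 3 \<and>
    yy a w mod 3 \<noteq> (yy a w+1) mod 3" using R[OF Y r1 r2] .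
  have B: "yy a w + 1 \<in> BE k a"
  proof (cases "w < 2*k")
    case True
    have "yy a w + 1 + 2 \<le> (w+1)*a" using Y Q1 by linarith
    then have "\<exists>u i. 1 \<le> u \<and> u < 2*k \<and> yy a w + 1 = yy a u + 1 + 3*i \<and> yy a w + 1 + 2 \<le> (u+1)*a"
      using True assms by (intro exI[of _ w] exI[of _ 0]) simp
    then show ?thesis unfolding BE_def by blast
  next
    case False
    then have "w = 2*k" using assms by simp
    then have "Q = k" unfolding Q_def by simp
    then have "yy a w + 1 = 2*k*a + 2 + 3*0" using Y \<open>w = 2*k\<close> aa by (simp add: algebra_simps)
    then show ?thesis unfolding BE_def by blast
  qed
  show ?thesis using N1 N2 RR B by blast
qed

lemma memI:
  assumes "s*a \<le> n + 3*(s div 2)" "n + 2 \<le> s*a"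
  shows "n \<in> DD a b"
  by (rule mem2[of "s*a - n" s]) (use assms in auto)

lemma cons:
  assumes "x+1 \<in> DD a b" "x+2 \<in> DD a b" "x+3 \<in> DD a b" "x+3 \<in> BE k a"
  shows "\<exists>y1 y2 y3. NX (DD a b) x y1 \<and> NX (DD a b) y1 y2 \<and> NX (DD a b) y2 y3 \<and>
    y1 mod 3 \<noteq> y2 mod 3 \<and> y1 mod 3 \<noteq> y3 mod 3 \<and> y2 mod 3 \<noteq> y3 mod 3 \<and> y3 \<in> BE k a"
proof -
  have "NX (DD a b) x (x+1)" "NX (DD a b) (x+1) (x+2)" "NX (DD a b) (x+2) (x+3)"
    using assms unfolding NX_def by auto
  moreover have "(x+1) mod 3 \<noteq> (x+2) mod 3 \<and> (x+1) mod 3 \<noteq> (x+3) mod 3 \<and> (x+2) mod 3 \<noteq> (x+3) mod 3"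
    by (simp add: mod_Suc)
  ultimately show ?thesis using assms(4) by blast
qed

lemma step:
  assumes "x \<in> BE k a"
  shows "\<exists>y1 y2 y3. NX (DD a b) x y1 \<and> NX (DD a b) y1 y2 \<and> NX (DD a b) y2 y3 \<and>
    y1 mod 3 \<noteq> y2 mod 3 \<and> y1 mod 3 \<noteq> y3 mod 3 \<and> y2 mod 3 \<noteq> y3 mod 3 \<and> y3 \<in> BE k a"
proof -
  consider "x = 0" | u i where "1 \<le> u" "u < 2*k" "x = yy a u + 1 + 3*i" "x + 2 \<le> (u+1)*a"
    | i where "x = 2*k*a + 2 + 3*i"
    using assms unfolding BE_def by blast
  then show ?thesis
  proof cases
    case 1
    have S: "NX (DD a b) (1*a) (yy a 1) \<and> NX (DD a b) (yy a 1) (yy a 1 + 1) \<and>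
      (1*a) mod 3 \<noteq> yy a 1 mod 3 \<and> (1*a) mod 3 \<noteq> (yy a 1 + 1) mod 3 \<and>
      yy a 1 mod 3 \<noteq> (yy a 1+1) mod 3 \<and> yy a 1 + 1 \<in> BE k a" using seg[of 1] k1 by simp
    have "NX (DD a b) x (1*a)" unfolding NX_def 1
    proof (intro conjI allI impI)
      show "0 < 1*a" using a4 by simp
      show "1*a \<in> DD a b" by (rule mem1)
      fix z assume "0 < z \<and> z < 1*a"
      then show "z \<notin> DD a b" by (intro gap[of 0]) auto
    qed
    then show ?thesis using S by blast
  next
    case (2 u i)
    define Q where "Q = (u+1) div 2"
    have Y: "yy a u + 3*Q = (u+1)*a" unfolding Q_def by (rule yyeq)
    show ?thesis
    proof (cases "x + 5 \<le> (u+1)*a")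
      case True
      have m: "x + j \<in> DD a b" if "j \<le> 3" for j
        by (rule memI[of "u+1"]) (use Y True that 2 in \<open>auto simp: Q_def\<close>)
      have "x + 3 = yy a u + 1 + 3*(i+1) \<and> x + 3 + 2 \<le> (u+1)*a" using 2 True by simp
      then have "x+3 \<in> BE k a" unfolding BE_def using 2 by blast
      then show ?thesis using cons m[of 1] m[of 2] m[of 3] by simp
    next
      case False
      have P: "\<And>Yv P. Yv + 3*Q = P \<Longrightarrow> x = Yv+1+3*i \<Longrightarrow> x+2 \<le> P \<Longrightarrow> \<not> x+5 \<le> P \<Longrightarrow> x+2 = P"
        by (rule presb)
      have x2: "x + 2 = (u+1)*a" using P[OF Y 2(3) 2(4) False] .
      have S: "NX (DD a b) ((u+1)*a) (yy a (u+1)) \<and> NX (DD a b) (yy a (u+1)) (yy a (u+1) + 1) \<and>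
        ((u+1)*a) mod 3 \<noteq> yy a (u+1) mod 3 \<and> ((u+1)*a) mod 3 \<noteq> (yy a (u+1) + 1) mod 3 \<and>
        yy a (u+1) mod 3 \<noteq> (yy a (u+1)+1) mod 3 \<and> yy a (u+1) + 1 \<in> BE k a" using seg[of "u+1"] 2 by simp
      have "NX (DD a b) x ((u+1)*a)" unfolding NX_def
      proof (intro conjI allI impI)
        show "x < (u+1)*a" using x2 by simp
        show "(u+1)*a \<in> DD a b" by (rule mem1)
        fix z assume "x < z \<and> z < (u+1)*a"
        then have "z + 1 = (u+1)*a" using x2 by simp
        then show "z \<notin> DD a b" by (rule gap2) (use 2 in simp)
      qed
      then show ?thesis using S by blast
    qed
  next
    case (3 i)
    have "x+3 \<in> BE k a" unfolding BE_def using 3 by (auto intro!: exI[of _ "i+1"])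
    then show ?thesis using cons mem3 3 by simp
  qed
qed

lemma gen_eq: "submonoid_gen {a, 2*a-3, 2*a-2} = DD a b"
proof
  have e1: "2*a-3 = a+b" and e2: "2*a-2 = a+b+1" using ab by simp_all
  show "submonoid_gen {a, 2*a-3, 2*a-2} \<subseteq> DD a b"
  proof
    fix n assume "n \<in> submonoid_gen {a, 2*a-3, 2*a-2}"
    then show "n \<in> DD a b"
    proof (induction rule: submonoid_gen.induct)
      case zero
      show ?case unfolding DD_def by (rule CollectI, rule exI[of _ 0], rule exI[of _ 0], rule exI[of _ 0]) simp
    next
      case (gen_add s x)
      obtain m t j where h: "j \<le> t" "t \<le> m" "x = m*a + t*b + j" using gen_add.IH unfolding DD_def by blast
      have "s = a \<or> s = a+b \<or> s = a+b+1" using gen_add.hyps e1 e2 by auto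
      then show ?case
      proof (elim disjE)
        assume "s = a"
        then have "s + x = (m+1)*a + t*b + j" using h by simp
        then show ?thesis unfolding DD_def using h by (intro CollectI exI[of _ "m+1"] exI[of _ t] exI[of _ j]) simp
      next
        assume "s = a+b"
        then have "s + x = (m+1)*a + (t+1)*b + j" using h by simp
        then show ?thesis unfolding DD_def using h by (intro CollectI exI[of _ "m+1"] exI[of _ "t+1"] exI[of _ j]) simp
      next
        assume "s = a+b+1"
        then have "s + x = (m+1)*a + (t+1)*b + (j+1)" using h by simp
        then show ?thesis unfolding DD_def using h by (intro CollectI exI[of _ "m+1"] exI[of _ "t+1"] exI[of _ "j+1"]) simp
      qed
    qed
  qed
  let ?G = "submonoid_gen {a, 2*a-3, 2*a-2}"
  have "\<forall>t j. j \<le> t \<longrightarrow> t \<le> m \<longrightarrow> m*a + t*b + j \<in> ?G" for m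
  proof (induction m)
    case 0
    then show ?case by (auto intro: submonoid_gen.zero)
  next
    case (Suc m)
    show ?case
    proof (intro allI impI)
      fix t j assume tj: "j \<le> t" "t \<le> Suc m"
      show "Suc m * a + t*b + j \<in> ?G"
      proof (cases t)
        case 0
        then have "Suc m * a + t*b + j = a + (m*a + 0*b + 0)" using tj by simp
        moreover have "m*a + 0*b + 0 \<in> ?G" using Suc.IH[rule_format, of 0 0] by simp
        ultimately show ?thesis by (metis insertI1 submonoid_gen.gen_add)
      next
        case (Suc t')
        show ?thesis
        proof (cases j)
          case 0
          then have "Suc m * a + t*b + j = (2*a-3) + (m*a + t'*b + 0)" using Suc e1 by simp
          moreover have "m*a + t'*b + 0 \<in> ?G" using Suc.IH[rule_format, of 0 t'] Suc tj by simp
          ultimately show ?thesis by (metis insertI1 insertI2 submonoid_gen.gen_add)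
        next
          case (Suc j')
          then have "Suc m * a + t*b + j = (2*a-2) + (m*a + t'*b + j')" using \<open>t = Suc t'\<close> e2 by simp
          moreover have "m*a + t'*b + j' \<in> ?G" using Suc.IH[rule_format, of j' t'] \<open>t = Suc t'\<close> Suc tj by simp
          ultimately show ?thesis by (metis insertI1 insertI2 submonoid_gen.gen_add)
        qed
      qed
    qed
  qed
  then show "DD a b \<subseteq> ?G" unfolding DD_def by blast
qed

lemma zero_D: "0 \<in> DD a b" using mem1[of 0] by simp

lemma enum0: "enumerate (DD a b) 0 = 0"
  unfolding enumerate_0 using zero_D by simp

lemma be_enum: "enumerate (DD a b) (3*j) \<in> BE k a"
proof (induction j)
  case 0
  then show ?case using enum0 unfolding BE_def by simp
next
  case (Suc j)
  obtain y1 y2 y3 where y: "NX (DD a b) (enumerate (DD a b) (3*j)) y1" "NX (DD a b) y1 y2" "NX (DD a b) y2 y3"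
    "y3 \<in> BE k a" using step[OF Suc.IH] by blast
  have "enumerate (DD a b) (Suc (3*j)) = y1" by (rule enum_next[OF inf_D refl y(1)])
  then have "enumerate (DD a b) (Suc (Suc (3*j))) = y2" by (rule enum_next[OF inf_D _ y(2)])
  then have "enumerate (DD a b) (Suc (Suc (Suc (3*j)))) = y3" by (rule enum_next[OF inf_D _ y(3)])
  moreover have "3 * Suc j = Suc (Suc (Suc (3*j)))" by simp
  ultimately show ?case using y(4) by metis
qed

lemma blk: "enumerate (DD a b) (j*3+1) mod 3 \<noteq> enumerate (DD a b) (j*3+2) mod 3 \<and>
  enumerate (DD a b) (j*3+1) mod 3 \<noteq> enumerate (DD a b) (j*3+3) mod 3 \<and>
  enumerate (DD a b) (j*3+2) mod 3 \<noteq> enumerate (DD a b) (j*3+3) mod 3"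
proof -
  obtain y1 y2 y3 where y: "NX (DD a b) (enumerate (DD a b) (3*j)) y1" "NX (DD a b) y1 y2" "NX (DD a b) y2 y3"
    "y1 mod 3 \<noteq> y2 mod 3 \<and> y1 mod 3 \<noteq> y3 mod 3 \<and> y2 mod 3 \<noteq> y3 mod 3" using step[OF be_enum] by blast
  have e1: "enumerate (DD a b) (Suc (3*j)) = y1" by (rule enum_next[OF inf_D refl y(1)])
  then have e2: "enumerate (DD a b) (Suc (Suc (3*j))) = y2" by (rule enum_next[OF inf_D _ y(2)])
  then have e3: "enumerate (DD a b) (Suc (Suc (Suc (3*j)))) = y3" by (rule enum_next[OF inf_D _ y(3)])
  have "j*3+1 = Suc (3*j)" "j*3+2 = Suc (Suc (3*j))" "j*3+3 = Suc (Suc (Suc (3*j)))" by simp_all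
  then show ?thesis using e1 e2 e3 y(4) by metis
qed

lemma first3: "enumerate (DD a b) 1 = a \<and> enumerate (DD a b) 2 = 2*a-3 \<and> enumerate (DD a b) 3 = 2*a-2"
proof -
  have S: "NX (DD a b) (1*a) (yy a 1) \<and> NX (DD a b) (yy a 1) (yy a 1 + 1)" using seg[of 1] k1 by simp
  have N0: "NX (DD a b) 0 (1*a)" unfolding NX_def
  proof (intro conjI allI impI)
    show "0 < 1*a" using a4 by simp
    show "1*a \<in> DD a b" by (rule mem1)
    fix z assume "0 < z \<and> z < 1*a"
    then show "z \<notin> DD a b" by (intro gap[of 0]) auto
  qed
  have e1: "enumerate (DD a b) (Suc 0) = 1*a" by (rule enum_next[OF inf_D enum0 N0])
  then have e2: "enumerate (DD a b) (Suc (Suc 0)) = yy a 1" using S enum_next[OF inf_D] by blast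
  then have e3: "enumerate (DD a b) (Suc (Suc (Suc 0))) = yy a 1 + 1" using S enum_next[OF inf_D] by blast
  have "yy a 1 = 2*a-3" unfolding yy_def by simp
  then show ?thesis using e1 e2 e3 a4 by (simp add: numeral_eq_Suc)
qed

lemma numsg: "numerical_semigroup (DD a b)"
  unfolding numerical_semigroup_def
proof (intro conjI ballI)
  show "0 \<in> DD a b" by (rule zero_D)
  fix x y assume "x \<in> DD a b" "y \<in> DD a b"
  then obtain m1 t1 j1 m2 t2 j2 where h: "j1 \<le> t1" "t1 \<le> m1" "x = m1*a + t1*b + j1"
    "j2 \<le> t2" "t2 \<le> m2" "y = m2*a + t2*b + j2" unfolding DD_def by blast
  have "x + y = (m1+m2)*a + (t1+t2)*b + (j1+j2)" using h by (simp add: algebra_simps)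
  then show "x + y \<in> DD a b" unfolding DD_def using h by (intro CollectI exI[of _ "m1+m2"] exI[of _ "t1+t2"] exI[of _ "j1+j2"]) simp
next
  have "UNIV - DD a b \<subseteq> {..<2*k*a}" using mem3 by (auto simp: not_le[symmetric])
  then show "finite (UNIV - DD a b)" using finite_subset by blast
qed

end

lemma bij3:
  fixes f :: "nat \<Rightarrow> nat"
  assumes "f 1 \<noteq> f 2" "f 1 \<noteq> f 3" "f 2 \<noteq> f 3" "\<And>i. f i < 3"
  shows "bij_betw f {1..3} {0..<3}"
proof -
  have I: "{1..3::nat} = {1,2,3}" by auto
  have inj: "inj_on f {1..3}" unfolding I inj_on_def using assms by auto
  have c: "card (f ` {1..3}) = 3" using card_image[OF inj] by simp
  have sub: "f ` {1..3} \<subseteq> {0..<3}" using assms(4) by auto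
  have "f ` {1..3} = {0..<3}" by (rule card_subset_eq) (use sub c in auto)
  then show ?thesis using inj unfolding bij_betw_def by blast
qed


lemma set3: "{f i |i::nat. 1 \<le> i \<and> i \<le> 3} = {f 1, f 2, f 3}"
proof
  show "{f i |i::nat. 1 \<le> i \<and> i \<le> 3} \<subseteq> {f 1, f 2, f 3}"
  proof
    fix x assume "x \<in> {f i |i::nat. 1 \<le> i \<and> i \<le> 3}"
    then obtain i :: nat where "x = f i" "1 \<le> i" "i \<le> 3" by blast
    then have "i = 1 \<or> i = 2 \<or> i = 3" by linarith
    then show "x \<in> {f 1, f 2, f 3}" using \<open>x = f i\<close> by auto
  qed
  show "{f 1, f 2, f 3} \<subseteq> {f i |i::nat. 1 \<le> i \<and> i \<le> 3}" by force
qed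

theorem lemma4p6:
  fixes k :: nat
  assumes "k \<ge> 1"
  defines "a \<equiv> 3 * k + 1"
  shows "perm_numerical_semigroup 3 (submonoid_gen {a, 2 * a - 3, 2 * a - 2})"
proof -
  define b where "b = 3*k - 2"
  have H: "k \<ge> 1" "a = 3*k+1" "b = 3*k-2" using assms a_def b_def by simp_all
  note G = gen_eq[OF H]
  have E: "{enumerate (DD a b) i | i. 1 \<le> i \<and> i \<le> 3} = {a, 2*a-3, 2*a-2}"
    using first3[OF H] set3[of "enumerate (DD a b)"] by simp
  show ?thesis unfolding G perm_numerical_semigroup_def sg_elem_def
  proof (intro conjI allI)
    show "numerical_semigroup (DD a b)" by (rule numsg[OF H])
    show "DD a b = submonoid_gen {enumerate (DD a b) i | i. 1 \<le> i \<and> i \<le> 3}" using G E by simp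
    fix j
    show "bij_betw (\<lambda>i. enumerate (DD a b) (j * 3 + i) mod 3) {1..3} {0..<3}"
      by (rule bij3) (use blk[OF H, of j] in auto)
  qed
qed

end
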